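(* Let $(\Omega,\Sigma,\mu)$ be a finite measure space, let $X(\mu)$ be a strictly rectangular function space, let $f\in L^0(\mu)$ with $f\ge0$, and let $A_1,\dots,A_n\in\Sigma_f$ be pairwise disjoint. If $0\le a_j\le b_j$ for $j=1,\dots,n$, then $$\Big\|\sum_{j=1}^n a_j\chi_{A_j}f\Big\|\le\Big\|\sum_{j=1}^n b_j\chi_{A_j}f\Big\|.$$
   Context: $L^0(\mu)$ is the space of equivalence classes (modulo $\mu$-a.e. equality) of real $\Sigma$-measurable functions. A strictly rectangular function space is a vector subspace $X(\mu)\subseteq L^0(\mu)$ with a norm such that $\chi_Ah\in X(\mu)$ and $\|\chi_Ah\|\le\|h\|$ for all $h\in X(\mu)$, $A\in\Sigma$. $\Sigma_f=\{A\in\Sigma: f\chi_A\in X(\mu)\}$. *)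

theory Defs
  imports "HOL-Analysis.Analysis"
begin

text \<open>Elements of L^0(mu) are represented by real-valued measurable functions;
  equivalence classes are modelled by requiring X to be closed under a.e. equality
  and the norm N to be invariant under a.e. equality.\<close>

definition L0 :: "'a measure \<Rightarrow> ('a \<Rightarrow> real) set" where
  "L0 M = borel_measurable M"

definition strictly_rectangular ::
  "'a measure \<Rightarrow> ('a \<Rightarrow> real) set \<Rightarrow> (('a \<Rightarrow> real) \<Rightarrow> real) \<Rightarrow> bool" where
  "strictly_rectangular M X N \<longleftrightarrow>
     \<comment> \<open>X is a set of classes in L^0\<close>
     X \<subseteq> L0 M \<and>
     (\<forall>h\<in>X. \<forall>g\<in>L0 M. (AE x in M. g x = h x) \<longrightarrow> g \<in> X) \<and>
     (\<forall>h\<in>X. \<forall>g\<in>X. (AE x in M. g x = h x) \<longrightarrow> N g = N h) \<and>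
     \<comment> \<open>vector subspace\<close>
     (\<lambda>x. 0) \<in> X \<and>
     (\<forall>h\<in>X. \<forall>g\<in>X. (\<lambda>x. h x + g x) \<in> X) \<and>
     (\<forall>h\<in>X. \<forall>c::real. (\<lambda>x. c * h x) \<in> X) \<and>
     \<comment> \<open>N is a norm on the quotient\<close>
     (\<forall>h\<in>X. 0 \<le> N h) \<and>
     (\<forall>h\<in>X. N h = 0 \<longleftrightarrow> (AE x in M. h x = 0)) \<and>
     (\<forall>h\<in>X. \<forall>c::real. N (\<lambda>x. c * h x) = \<bar>c\<bar> * N h) \<and>
     (\<forall>h\<in>X. \<forall>g\<in>X. N (\<lambda>x. h x + g x) \<le> N h + N g) \<and>
     \<comment> \<open>strict rectangularity\<close>
     (\<forall>h\<in>X. \<forall>A\<in>sets M. (\<lambda>x. indicator A x * h x) \<in> X \<and>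
                           N (\<lambda>x. indicator A x * h x) \<le> N h)"

definition Sigma_f ::
  "'a measure \<Rightarrow> ('a \<Rightarrow> real) set \<Rightarrow> ('a \<Rightarrow> real) \<Rightarrow> 'a set set" where
  "Sigma_f M X f = {A \<in> sets M. (\<lambda>x. f x * indicator A x) \<in> X}"

end

theory Submission
  imports Defs
begin

lemma sr_conv:
  assumes sr: "strictly_rectangular M X N" and w: "w \<in> X" and C: "C \<in> sets M"
    and r: "0 \<le> r" "r \<le> 1" and g: "g \<in> X"
    and eq: "\<And>x. x \<in> space M \<Longrightarrow> g x = r * w x + (1 - r) * (indicator C x * w x)"
  shows "N g \<le> N w"
proof -
  from sr have add: "\<forall>h\<in>X. \<forall>g\<in>X. (\<lambda>x. h x + g x) \<in> X"
    and sc: "\<forall>h\<in>X. \<forall>c::real. (\<lambda>x. c * h x) \<in> X"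
    and hom: "\<forall>h\<in>X. \<forall>c::real. N (\<lambda>x. c * h x) = \<bar>c\<bar> * N h"
    and tri: "\<forall>h\<in>X. \<forall>g\<in>X. N (\<lambda>x. h x + g x) \<le> N h + N g"
    and rect: "\<forall>h\<in>X. \<forall>A\<in>sets M. (\<lambda>x. indicator A x * h x) \<in> X \<and>
                           N (\<lambda>x. indicator A x * h x) \<le> N h"
    and aeq: "\<forall>h\<in>X. \<forall>g\<in>X. (AE x in M. g x = h x) \<longrightarrow> N g = N h"
    unfolding strictly_rectangular_def by blast+
  define v where "v = (\<lambda>x. indicator C x * w x)"
  have v: "v \<in> X" "N v \<le> N w" using rect w C unfolding v_def by auto
  have h1: "(\<lambda>x. r * w x) \<in> X" using sc w by blast
  have h2: "(\<lambda>x. (1 - r) * v x) \<in> X" using sc v by blast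
  define h where "h = (\<lambda>x. r * w x + (1 - r) * v x)"
  have hX: "h \<in> X" unfolding h_def using add[rule_format, OF h1 h2] by simp
  have "AE x in M. g x = h x" by (rule AE_I2) (simp add: eq h_def v_def)
  have "N g = N h" by (rule aeq[rule_format, OF hX g]) fact
  also have "N h \<le> N (\<lambda>x. r * w x) + N (\<lambda>x. (1 - r) * v x)"
    unfolding h_def using tri[rule_format, OF h1 h2] by simp
  also have "\<dots> = r * N w + (1 - r) * N v" using hom w v r by simp
  also have "\<dots> \<le> r * N w + (1 - r) * N w"
    using v r by (simp add: mult_left_mono)
  also have "\<dots> = N w" by (simp add: algebra_simps)
  finally show ?thesis .
qed

lemma sum_in_X:
  assumes sr: "strictly_rectangular M X N"
    and A: "\<forall>j\<in>I. A j \<in> Sigma_f M X f" and fin: "finite I"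
  shows "(\<lambda>x. \<Sum>j\<in>I. c j * indicator (A j) x * f x) \<in> X"
  using fin A
proof (induction I rule: finite_induct)
  case empty
  then show ?case using sr unfolding strictly_rectangular_def by simp
next
  case (insert k I)
  from sr have add: "\<forall>h\<in>X. \<forall>g\<in>X. (\<lambda>x. h x + g x) \<in> X"
    and sc: "\<forall>h\<in>X. \<forall>c::real. (\<lambda>x. c * h x) \<in> X"
    unfolding strictly_rectangular_def by blast+
  have "(\<lambda>x. f x * indicator (A k) x) \<in> X" using insert.prems unfolding Sigma_f_def by auto
  then have "(\<lambda>x. c k * (f x * indicator (A k) x)) \<in> X" using sc[rule_format, of _ "c k"] by simp
  moreover have "(\<lambda>x. c k * (f x * indicator (A k) x)) = (\<lambda>x. c k * indicator (A k) x * f x)"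
    by (auto simp: algebra_simps)
  ultimately have "(\<lambda>x. c k * indicator (A k) x * f x) \<in> X" by simp
  with insert add show ?case by simp
qed

lemma step:
  fixes n k :: nat and c :: "nat \<Rightarrow> real" and f :: "'a \<Rightarrow> real"
  assumes sr: "strictly_rectangular M X N"
    and A: "\<forall>j\<in>{1..n}. A j \<in> Sigma_f M X f"
    and dis: "disjoint_family_on A {1..n}"
    and k: "k \<in> {1..n}" and s: "0 \<le> c k" "c k \<le> t"
  shows "N (\<lambda>x. \<Sum>j=1..n. c j * indicator (A j) x * f x)
         \<le> N (\<lambda>x. \<Sum>j=1..n. (c(k := t)) j * indicator (A j) x * f x)"
proof (cases "t = 0")
  case True
  then have "c(k := t) = c" using s by (auto simp: fun_eq_iff)
  then show ?thesis by simp
next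
  case False
  then have tpos: "t > 0" using s by simp
  define r where "r = c k / t"
  have r: "0 \<le> r" "r \<le> 1" using s tpos unfolding r_def by auto
  let ?w = "\<lambda>x. \<Sum>j=1..n. (c(k := t)) j * indicator (A j) x * f x"
  let ?g = "\<lambda>x. \<Sum>j=1..n. c j * indicator (A j) x * f x"
  define u where "u = (\<lambda>x. \<Sum>j\<in>{1..n}-{k}. c j * indicator (A j) x * f x)"
  have split: "(\<Sum>j=1..n. d j * indicator (A j) x * f x)
      = d k * indicator (A k) x * f x + (\<Sum>j\<in>{1..n}-{k}. d j * indicator (A j) x * f x)" for d x
    using k by (intro sum.remove[of "{1..n}" k "\<lambda>j. d j * indicator (A j) x * f x"]) auto
  have sum_eq: "\<And>x. (\<Sum>j\<in>{1..n}-{k}. (c(k := t)) j * indicator (A j) x * f x) = u x"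
    unfolding u_def by (rule sum.cong) auto
  have u0: "\<And>x. x \<in> A k \<Longrightarrow> u x = 0"
  proof -
    fix x assume xk: "x \<in> A k"
    have "\<And>j. j \<in> {1..n}-{k} \<Longrightarrow> x \<notin> A j"
      using dis k xk unfolding disjoint_family_on_def by blast
    then show "u x = 0" unfolding u_def by (auto intro!: sum.neutral)
  qed
  have Ak: "A k \<in> sets M" using A k unfolding Sigma_f_def by auto
  show ?thesis
  proof (rule sr_conv[OF sr _ _ r])
    show "?w \<in> X" by (rule sum_in_X[OF sr A]) simp
    show "?g \<in> X" by (rule sum_in_X[OF sr A]) simp
    show "space M - A k \<in> sets M" using Ak by auto
    fix x assume x: "x \<in> space M"
    show "?g x = r * ?w x + (1 - r) * (indicator (space M - A k) x * ?w x)"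
    proof (cases "x \<in> A k")
      case True
      then show ?thesis using split[of c x] split[of "c(k:=t)" x] sum_eq[of x] u0[OF True] tpos
        by (simp add: r_def)
    next
      case False
      then show ?thesis using x split[of c x] split[of "c(k:=t)" x] sum_eq[of x]
        by (simp add: algebra_simps)
    qed
  qed
qed

theorem lemma3p3:
  fixes M :: "'a measure" and X :: "('a \<Rightarrow> real) set" and N :: "('a \<Rightarrow> real) \<Rightarrow> real"
    and f :: "'a \<Rightarrow> real" and n :: nat and A :: "nat \<Rightarrow> 'a set" and a b :: "nat \<Rightarrow> real"
  assumes "finite_measure M"
    and "strictly_rectangular M X N"
    and "f \<in> L0 M" and "AE x in M. 0 \<le> f x"
    and "\<forall>j\<in>{1..n}. A j \<in> Sigma_f M X f"
    and "disjoint_family_on A {1..n}"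
    and "\<forall>j\<in>{1..n}. 0 \<le> a j \<and> a j \<le> b j"
  shows "N (\<lambda>x. \<Sum>j=1..n. a j * indicator (A j) x * f x)
         \<le> N (\<lambda>x. \<Sum>j=1..n. b j * indicator (A j) x * f x)"
proof -
  define c where "c = (\<lambda>m j. if j \<le> m then b j else a j)"
  define F where "F = (\<lambda>d. N (\<lambda>x. \<Sum>j=1..n. d j * indicator (A j) x * f x))"
  have mono: "F (c m) \<le> F (c (Suc m))" for m
  proof (cases "Suc m \<in> {1..n}")
    case True
    have eq: "c (Suc m) = (c m)(Suc m := b (Suc m))"
      unfolding c_def by (auto simp: fun_eq_iff)
    have "0 \<le> c m (Suc m)" "c m (Suc m) \<le> b (Suc m)"
      using assms(7) True unfolding c_def by auto
    from step[where c="c m" and k="Suc m" and t="b (Suc m)", OF assms(2) assms(5) assms(6) True this] show ?thesis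
      unfolding F_def eq .
  next
    case False
    then have "Suc m > n" by auto
    then have "\<And>j. j \<in> {1..n} \<Longrightarrow> c m j = c (Suc m) j" unfolding c_def by auto
    then have "(\<lambda>x. \<Sum>j=1..n. c m j * indicator (A j) x * f x)
             = (\<lambda>x. \<Sum>j=1..n. c (Suc m) j * indicator (A j) x * f x)"
      by (intro ext sum.cong) auto
    then show ?thesis unfolding F_def by simp
  qed
  have "F (c 0) \<le> F (c n)" by (rule lift_Suc_mono_le[of "\<lambda>m. F (c m)"]) (use mono in auto)
  moreover have "(\<lambda>x. \<Sum>j=1..n. c 0 j * indicator (A j) x * f x)
             = (\<lambda>x. \<Sum>j=1..n. a j * indicator (A j) x * f x)"
    unfolding c_def by (intro ext sum.cong) auto
  moreover have "(\<lambda>x. \<Sum>j=1..n. c n j * indicator (A j) x * f x)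
             = (\<lambda>x. \<Sum>j=1..n. b j * indicator (A j) x * f x)"
    unfolding c_def by (intro ext sum.cong) auto
  ultimately show ?thesis unfolding F_def by simp
qed

end
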